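(* Let $N \in \mathbb{R}^{n \times r}$, $V \in \mathbb{R}^{r \times n}$, and for $\kappa\in\mathbb{R}^r_+$ let $f_\kappa(x) = N_\kappa x^V$ on $\mathbb{R}^n_+$; let $S = \mathrm{im}(N)$. Let $M \in \mathbb{R}^{d' \times n}$ and $\gamma\colon \mathbb{R}^r_+\to\mathbb{R}_+^{d'}$, and set $Y_\kappa = \{x \in \mathbb{R}^n_+ \mid x^M = \gamma(\kappa)\}$. Assume $Y_\kappa\subseteq\{x\in\mathbb{R}^n_+\mid f_\kappa(x)=0\}$ for all $\kappa\in\mathbb{R}^r_+$. Assume moreover: (i) $\sigma(\ker(M)) \cap \sigma(S) \neq \{0\}$; (ii) for every $x \in \mathbb{R}^n_+$ there exists $\kappa \in \mathbb{R}^r_+$ with $x \in Y_\kappa$. Then there exist $\kappa^* \in \mathbb{R}^r_+$ and distinct $x^*,y^* \in \mathbb{R}^n_+$ such that $x^*, y^* \in Y_{\kappa^*}$ and $x^* - y^* \in S$.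
   Context: $\mathbb{R}_+$ denotes the strictly positive reals. $(x^V)_j=\prod_i x_i^{v_{ji}}$ and $(x^M)_k=\prod_i x_i^{m_{ki}}$ (real exponents), $N_\kappa=N\,\mathrm{diag}(\kappa)$. $\sigma$ is the componentwise sign vector, $\sigma(T)=\{\sigma(x)\mid x\in T\}$, and $0$ denotes the zero sign vector. *)

theory Defs
  imports "HOL-Analysis.Analysis"
begin

definition pos_orthant :: "(real ^ 'n) set" where
  "pos_orthant = {x. \<forall>i. x $ i > 0}"

definition monom_vec :: "real ^ 'n \<Rightarrow> real ^ 'n ^ 'r \<Rightarrow> real ^ 'r" where
  "monom_vec x V = (\<chi> j. \<Prod>i\<in>UNIV. (x $ i) powr (V $ j $ i))"

definition Nkappa :: "real ^ 'r ^ 'n \<Rightarrow> real ^ 'r \<Rightarrow> real ^ 'r ^ 'n" where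
  "Nkappa N \<kappa> = (\<chi> i j. N $ i $ j * \<kappa> $ j)"

definition f_kappa :: "real ^ 'r ^ 'n \<Rightarrow> real ^ 'n ^ 'r \<Rightarrow> real ^ 'r \<Rightarrow> real ^ 'n \<Rightarrow> real ^ 'n" where
  "f_kappa N V \<kappa> x = Nkappa N \<kappa> *v monom_vec x V"

definition sign_vec :: "real ^ 'n \<Rightarrow> real ^ 'n" where
  "sign_vec x = (\<chi> i. sgn (x $ i))"

definition Y_set :: "real ^ 'n ^ 'd \<Rightarrow> (real ^ 'r \<Rightarrow> real ^ 'd) \<Rightarrow> real ^ 'r \<Rightarrow> (real ^ 'n) set" where
  "Y_set M \<gamma> \<kappa> = {x \<in> pos_orthant. monom_vec x M = \<gamma> \<kappa>}"

end

theory Submission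
  imports Defs
begin

theorem mainTheorem18:
  fixes N :: "real ^ 'r ^ 'n" and V :: "real ^ 'n ^ 'r"
    and M :: "real ^ 'n ^ 'd" and \<gamma> :: "real ^ 'r \<Rightarrow> real ^ 'd"
  assumes gamma_pos: "\<forall>\<kappa>\<in>pos_orthant. \<gamma> \<kappa> \<in> pos_orthant"
    and Y_sub: "\<forall>\<kappa>\<in>pos_orthant. Y_set M \<gamma> \<kappa> \<subseteq> {x \<in> pos_orthant. f_kappa N V \<kappa> x = 0}"
    and i: "sign_vec ` {u. M *v u = 0} \<inter> sign_vec ` range (\<lambda>u. N *v u) \<noteq> {0}"
    and ii: "\<forall>x\<in>pos_orthant. \<exists>\<kappa>\<in>pos_orthant. x \<in> Y_set M \<gamma> \<kappa>"
  shows "\<exists>\<kappa>\<in>pos_orthant. \<exists>x\<in>pos_orthant. \<exists>y\<in>pos_orthant.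
           x \<noteq> y \<and> x \<in> Y_set M \<gamma> \<kappa> \<and> y \<in> Y_set M \<gamma> \<kappa> \<and> x - y \<in> range (\<lambda>u. N *v u)"
proof -
  have z: "(0::real^'n) \<in> sign_vec ` {u. M *v u = 0} \<inter> sign_vec ` range (\<lambda>u. N *v u)"
  proof -
    have "sign_vec (0::real^'n) = 0" by (simp add: sign_vec_def vec_eq_iff)
    moreover have "M *v (0::real^'n) = 0" "N *v (0::real^'r) = 0" by simp_all
    ultimately show ?thesis by (metis (mono_tags, lifting) IntI image_eqI mem_Collect_eq rangeI)
  qed
  obtain s where s: "s \<in> sign_vec ` {u. M *v u = 0} \<inter> sign_vec ` range (\<lambda>u. N *v u)" "s \<noteq> 0"
    using i z by blast
  then obtain u v where uM: "M *v u = 0" and su: "s = sign_vec u" and sw: "s = sign_vec (N *v v)"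
    by blast
  define w where "w = N *v v"
  have sg: "sgn (u $ i) = sgn (w $ i)" for i
    using su sw unfolding w_def sign_vec_def by (metis vec_lambda_beta)
  define y :: "real^'n" where "y = (\<chi> i. if u$i = 0 then 1 else w$i / (exp (u$i) - 1))"
  define x :: "real^'n" where "x = (\<chi> i. exp (u$i) * y$i)"
  have ypos: "y $ i > 0" for i
  proof (cases "u$i = 0")
    case True then show ?thesis by (simp add: y_def)
  next
    case False
    show ?thesis
    proof (cases "u$i > 0")
      case True
      then have "w$i > 0" using sg[of i] by (metis sgn_pos sgn_greater)
      moreover have "exp (u$i) > 1" using True by simp
      ultimately show ?thesis using False by (simp add: y_def)
    next
      case f2: False
      then have "u$i < 0" using False by simp
      then have "w$i < 0" using sg[of i] by (metis sgn_neg sgn_less)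
      moreover have "exp (u$i) < 1" using \<open>u$i<0\<close> by simp
      ultimately show ?thesis using False by (simp add: y_def divide_neg_neg)
    qed
  qed
  have xpos: "x $ i > 0" for i using ypos[of i] by (simp add: x_def)
  have xp: "x \<in> pos_orthant" and yp: "y \<in> pos_orthant"
    using xpos ypos by (auto simp: pos_orthant_def)
  have diff: "x - y = w"
  proof -
    have "x$i - y$i = w$i" for i
    proof (cases "u$i = 0")
      case True
      then have "w$i = 0" using sg[of i] by (metis sgn_0 sgn_0_0)
      then show ?thesis using True by (simp add: x_def y_def)
    next
      case False
      then have "exp (u$i) - 1 \<noteq> 0" by simp
      have "exp (u$i) * (w$i / (exp (u$i) - 1)) - w$i / (exp (u$i) - 1) = w$i"
        using \<open>exp (u$i) - 1 \<noteq> 0\<close> by (simp add: divide_simps) (simp add: algebra_simps)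
      then show ?thesis using False by (simp add: x_def y_def)
    qed
    then show ?thesis by (simp add: vec_eq_iff)
  qed
  have neq: "x \<noteq> y"
  proof
    assume "x = y"
    then have "w = 0" using diff by simp
    then have "s = 0" using sw unfolding w_def sign_vec_def by (simp add: vec_eq_iff)
    then show False using s(2) by simp
  qed
  have mon: "monom_vec x M = monom_vec y M"
  proof -
    have "(\<Prod>i\<in>UNIV. (x $ i) powr (M $ k $ i)) = (\<Prod>i\<in>UNIV. (y $ i) powr (M $ k $ i))" for k
    proof -
      have "(\<Prod>i\<in>UNIV. (x $ i) powr (M $ k $ i))
          = (\<Prod>i\<in>UNIV. exp (M $ k $ i * u$i) * (y $ i) powr (M $ k $ i))"
      proof (rule prod.cong[OF refl])
        fix i
        have "(x $ i) powr (M $ k $ i) = exp (u$i) powr (M$k$i) * (y $ i) powr (M $ k $ i)"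
          unfolding x_def using ypos[of i] by (simp add: powr_mult)
        also have "exp (u$i) powr (M$k$i) = exp (M $ k $ i * u$i)"
          by (simp add: powr_def)
        finally show "(x $ i) powr (M $ k $ i) = exp (M $ k $ i * u$i) * (y $ i) powr (M $ k $ i)" .
      qed
      also have "\<dots> = exp (\<Sum>i\<in>UNIV. M $ k $ i * u$i) * (\<Prod>i\<in>UNIV. (y $ i) powr (M $ k $ i))"
        by (simp add: prod.distrib exp_sum)
      also have "(\<Sum>i\<in>UNIV. M $ k $ i * u$i) = (M *v u) $ k"
        by (simp add: matrix_vector_mult_def)
      finally show ?thesis using uM by simp
    qed
    then show ?thesis by (simp add: monom_vec_def vec_eq_iff)
  qed
  obtain \<kappa> where k: "\<kappa> \<in> pos_orthant" "x \<in> Y_set M \<gamma> \<kappa>" using ii xp by blast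
  have "y \<in> Y_set M \<gamma> \<kappa>" using k(2) mon yp by (simp add: Y_set_def)
  moreover have "x - y \<in> range (\<lambda>u. N *v u)" using diff w_def by simp
  ultimately show ?thesis using k xp yp neq by blast
qed

end
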